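(* For each $X\in\{\mathrm{B_{ii}},\mathrm{B_{vi}},\mathrm{H_{ii}},\mathrm{H_{iii}}\}$, let $G_X$ be the group with generators $a,b,c$ and relations $\mathrm{B_{ii}}$: $ababab=bababa,\ bc=ab,\ ac=ca$; $\mathrm{B_{vi}}$: $aba=bab,\ aca=bac,\ acaca=cacac$; $\mathrm{H_{ii}}$: $abab=baba,\ aca=bac,\ acaca=cacac$; $\mathrm{H_{iii}}$: $aba=bab,\ bcba=cbac,\ cba=acb$; and let $G_X^+$ be the submonoid of $G_X$ generated by $a,b,c$. Then $G_X^+$ is not a Gaussian monoid; hence it is neither an Artin monoid nor a Garside monoid.
   Context: A monoid is Gaussian if it is atomic, cancellative, and admits the (left and right) divisibility theory, i.e. any two elements have a left least common multiple and a right least common multiple with respect to left/right divisibility ($U|_lV$ iff $V=UW$, $U|_rV$ iff $V=WU$ for some $W$). *)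

theory Defs
  imports "HOL-Algebra.Group"
begin

datatype gen = a | b | c

text \<open>A group word: a letter (g, True) stands for g, (g, False) for g inverse.\<close>
type_synonym word = "(gen \<times> bool) list"

definition pos :: "gen list \<Rightarrow> word" where
  "pos w = map (\<lambda>g. (g, True)) w"

inductive grp_step :: "(gen list \<times> gen list) set \<Rightarrow> word \<Rightarrow> word \<Rightarrow> bool"
  for R where
  rel: "(l, r) \<in> R \<Longrightarrow> grp_step R (u @ pos l @ v) (u @ pos r @ v)"
| cancel: "grp_step R (u @ [(g, s), (g, \<not> s)] @ v) (u @ v)"

definition grp_eq :: "(gen list \<times> gen list) set \<Rightarrow> word \<Rightarrow> word \<Rightarrow> bool" where
  "grp_eq R = equivclp (grp_step R)"

definition cls :: "(gen list \<times> gen list) set \<Rightarrow> word \<Rightarrow> word set" where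
  "cls R w = {v. grp_eq R w v}"

text \<open>The submonoid of the presented group generated by a, b, c: the elements
  represented by positive words, with the group multiplication.\<close>
definition pos_monoid :: "(gen list \<times> gen list) set \<Rightarrow> word set monoid" where
  "pos_monoid R = \<lparr> carrier = (\<lambda>w. cls R (pos w)) ` UNIV,
                    mult = (\<lambda>X Y. \<Union>u\<in>X. \<Union>v\<in>Y. cls R (u @ v)),
                    one = cls R [] \<rparr>"

datatype presentation = B_ii | B_vi | H_ii | H_iii

fun rels :: "presentation \<Rightarrow> (gen list \<times> gen list) set" where
  "rels B_ii = {([a,b,a,b,a,b], [b,a,b,a,b,a]), ([b,c], [a,b]), ([a,c], [c,a])}"
| "rels B_vi = {([a,b,a], [b,a,b]), ([a,c,a], [b,a,c]), ([a,c,a,c,a], [c,a,c,a,c])}"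
| "rels H_ii = {([a,b,a,b], [b,a,b,a]), ([a,c,a], [b,a,c]), ([a,c,a,c,a], [c,a,c,a,c])}"
| "rels H_iii = {([a,b,a], [b,a,b]), ([b,c,b,a], [c,b,a,c]), ([c,b,a], [a,c,b])}"

definition left_dvd :: "('a, 'm) monoid_scheme \<Rightarrow> 'a \<Rightarrow> 'a \<Rightarrow> bool" where
  "left_dvd M u v \<longleftrightarrow> (\<exists>w\<in>carrier M. v = u \<otimes>\<^bsub>M\<^esub> w)"

definition right_dvd :: "('a, 'm) monoid_scheme \<Rightarrow> 'a \<Rightarrow> 'a \<Rightarrow> bool" where
  "right_dvd M u v \<longleftrightarrow> (\<exists>w\<in>carrier M. v = w \<otimes>\<^bsub>M\<^esub> u)"

definition cancellative :: "('a, 'm) monoid_scheme \<Rightarrow> bool" where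
  "cancellative M \<longleftrightarrow>
     (\<forall>x\<in>carrier M. \<forall>y\<in>carrier M. \<forall>z\<in>carrier M.
        (x \<otimes>\<^bsub>M\<^esub> y = x \<otimes>\<^bsub>M\<^esub> z \<longrightarrow> y = z) \<and>
        (y \<otimes>\<^bsub>M\<^esub> x = z \<otimes>\<^bsub>M\<^esub> x \<longrightarrow> y = z))"

definition atomic :: "('a, 'm) monoid_scheme \<Rightarrow> bool" where
  "atomic M \<longleftrightarrow>
     (\<forall>x\<in>carrier M. \<exists>N::nat. \<forall>xs. set xs \<subseteq> carrier M - {\<one>\<^bsub>M\<^esub>} \<and>
        foldr (mult M) xs \<one>\<^bsub>M\<^esub> = x \<longrightarrow> length xs \<le> N)"

definition is_lcm :: "('a, 'm) monoid_scheme \<Rightarrow> ('a \<Rightarrow> 'a \<Rightarrow> bool) \<Rightarrow> 'a \<Rightarrow> 'a \<Rightarrow> 'a \<Rightarrow> bool" where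
  "is_lcm M d x y z \<longleftrightarrow> z \<in> carrier M \<and> d x z \<and> d y z \<and>
     (\<forall>w\<in>carrier M. d x w \<and> d y w \<longrightarrow> d z w)"

definition gaussian :: "('a, 'm) monoid_scheme \<Rightarrow> bool" where
  "gaussian M \<longleftrightarrow> monoid M \<and> atomic M \<and> cancellative M \<and>
     (\<forall>x\<in>carrier M. \<forall>y\<in>carrier M.
        (\<exists>z. is_lcm M (left_dvd M) x y z) \<and> (\<exists>z. is_lcm M (right_dvd M) x y z))"

end

theory Submission
  imports Defs
begin

lemma ge_refl[simp]: "grp_eq R u u" by (simp add: grp_eq_def)
lemma ge_sym: "grp_eq R u v \<Longrightarrow> grp_eq R v u" unfolding grp_eq_def by (rule equivclp_sym)
lemma ge_trans[trans]: "grp_eq R u v \<Longrightarrow> grp_eq R v w \<Longrightarrow> grp_eq R u w"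
  unfolding grp_eq_def by (rule equivclp_trans)

lemma step_ctx: "grp_step R u v \<Longrightarrow> grp_step R (p@u@q) (p@v@q)"
proof (induction rule: grp_step.induct)
  case (rel l r u v) then show ?case using grp_step.rel[of l r R "p@u" "v@q"] by simp
next
  case (cancel u g s v) then show ?case using grp_step.cancel[of R "p@u" g s "v@q"] by simp
qed

lemma ge_ctx: "grp_eq R u v \<Longrightarrow> grp_eq R (p@u@q) (p@v@q)"
  unfolding grp_eq_def
proof (induction rule: equivclp_induct)
  case base then show ?case by simp
next
  case (step y z) then show ?case by (metis equivclp_into_equivclp step_ctx)
qed

lemma ge_app: "grp_eq R u u' \<Longrightarrow> grp_eq R v v' \<Longrightarrow> grp_eq R (u@v) (u'@v')"
  using ge_ctx[of R u u' "[]" v] ge_ctx[of R v v' u' "[]"] by (simp add: ge_trans)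

definition iw :: "word \<Rightarrow> word" where "iw w = rev (map (\<lambda>(g,s). (g, \<not>s)) w)"

lemma ge_cancel1: "grp_eq R [(g,s),(g,\<not>s)] []"
  using grp_step.cancel[of R "[]" g s "[]"] by (simp add: grp_eq_def r_into_equivclp)

lemma iw_cancel: "grp_eq R (w @ iw w) []"
proof (induction w)
  case Nil then show ?case by (simp add: iw_def)
next
  case (Cons x w)
  obtain g s where x: "x = (g,s)" by fastforce
  have "(x#w) @ iw (x#w) = [x] @ (w @ iw w) @ [(g,\<not>s)]" by (simp add: iw_def x)
  moreover have "grp_eq R ([x] @ (w @ iw w) @ [(g,\<not>s)]) ([x] @ [] @ [(g,\<not>s)])"
    using Cons ge_ctx by blast
  moreover have "grp_eq R ([x] @ [] @ [(g,\<not>s)]) []" using ge_cancel1 x by simp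
  ultimately show ?case using ge_trans by metis
qed

lemma iw_cancel2: "grp_eq R (iw w @ w) []"
proof (induction w)
  case Nil then show ?case by (simp add: iw_def)
next
  case (Cons x w)
  obtain g s where x: "x = (g,s)" by fastforce
  have "iw (x#w) @ (x#w) = iw w @ [(g,\<not>s),(g,\<not>\<not>s)] @ w" by (simp add: iw_def x)
  moreover have "grp_eq R (iw w @ [(g,\<not>s),(g,\<not>\<not>s)] @ w) (iw w @ [] @ w)"
    using ge_cancel1 ge_ctx by blast
  ultimately show ?case using Cons ge_trans by (metis append_Nil)
qed

lemma ge_lcancel: "grp_eq R (p@u) (p@v) \<Longrightarrow> grp_eq R u v"
proof -
  assume h: "grp_eq R (p@u) (p@v)"
  have 1: "grp_eq R ((iw p @ p) @ u) ([] @ u)" using ge_app[OF iw_cancel2 ge_refl] by blast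
  have 2: "grp_eq R ((iw p @ p) @ v) ([] @ v)" using ge_app[OF iw_cancel2 ge_refl] by blast
  have "grp_eq R (iw p @ (p @ u)) (iw p @ (p @ v))" using ge_ctx[OF h, of "iw p" "[]"] by simp
  then show ?thesis using 1 2 by (metis append_assoc append_Nil ge_sym ge_trans)
qed

lemma ge_rcancel: "grp_eq R (u@p) (v@p) \<Longrightarrow> grp_eq R u v"
proof -
  assume h: "grp_eq R (u@p) (v@p)"
  have 1: "grp_eq R (u @ (p @ iw p)) (u @ [])" using ge_app[OF ge_refl iw_cancel] by blast
  have 2: "grp_eq R (v @ (p @ iw p)) (v @ [])" using ge_app[OF ge_refl iw_cancel] by blast
  have "grp_eq R ((u@p) @ iw p) ((v@p) @ iw p)" using ge_ctx[OF h, of "[]" "iw p"] by simp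
  then show ?thesis using 1 2 by (metis append_assoc append_Nil2 ge_sym ge_trans)
qed

lemma pos_app[simp]: "pos (u@v) = pos u @ pos v" by (simp add: pos_def)
lemma pos_Cons[simp]: "pos (x#v) = (x,True) # pos v" by (simp add: pos_def)
lemma pos_Nil[simp]: "pos [] = []" by (simp add: pos_def)
lemma length_pos[simp]: "length (pos u) = length u" by (simp add: pos_def)

lemma ge_relF: "(l,r) \<in> R \<Longrightarrow> w1 = u@l@v \<Longrightarrow> w2 = u@r@v \<Longrightarrow> grp_eq R (pos w1) (pos w2)"
  using grp_step.rel[of l r R "pos u" "pos v"] by (simp add: grp_eq_def r_into_equivclp)
lemma ge_relB: "(l,r) \<in> R \<Longrightarrow> w1 = u@r@v \<Longrightarrow> w2 = u@l@v \<Longrightarrow> grp_eq R (pos w1) (pos w2)"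
  using ge_relF ge_sym by metis

fun evw :: "(gen \<Rightarrow> bool \<Rightarrow> 's \<Rightarrow> 's) \<Rightarrow> word \<Rightarrow> 's \<Rightarrow> 's" where
  "evw f [] x = x" | "evw f (y#w) x = evw f w (f (fst y) (snd y) x)"

lemma evw_app[simp]: "evw f (u@v) x = evw f v (evw f u x)" by (induction u arbitrary: x) auto

lemma evw_step:
  assumes i: "\<forall>g s x. f g (\<not>s) (f g s x) = x"
    and r: "\<forall>(l,r)\<in>R. \<forall>x. evw f (pos l) x = evw f (pos r) x"
  shows "grp_step R u v \<Longrightarrow> evw f u = evw f v"
proof (induction rule: grp_step.induct)
  case (rel l r u v) then show ?case using r by fastforce
next
  case (cancel u g s v)
  have "f g (\<not>s) (f g s x) = x" for x using i by blast
  then show ?case by (auto simp: fun_eq_iff)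
qed

lemma evw_eq:
  assumes i: "\<forall>g s x. f g (\<not>s) (f g s x) = x"
    and r: "\<forall>(l,r)\<in>R. \<forall>x. evw f (pos l) x = evw f (pos r) x"
  shows "grp_eq R u v \<Longrightarrow> evw f u = evw f v"
  unfolding grp_eq_def
proof (induction rule: equivclp_induct)
  case base then show ?case by simp
next
  case (step y z) then show ?case using evw_step[OF i r] by metis
qed

definition lenf :: "gen \<Rightarrow> bool \<Rightarrow> int \<Rightarrow> int" where
  "lenf g s n = (if s then n + 1 else n - 1)"

lemma evw_len: "evw lenf (pos w) n = n + int (length w)"
  by (induction w arbitrary: n) (auto simp: lenf_def)

lemma len_eq:
  assumes "\<forall>(l,r)\<in>R. length l = length r" "grp_eq R (pos u) (pos v)"
  shows "length u = length v"
proof -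
  have "evw lenf (pos u) 0 = evw lenf (pos v) 0"
    using evw_eq[of lenf R, OF _ _ assms(2)] assms(1) by (auto simp: lenf_def evw_len)
  then show ?thesis by (simp add: evw_len)
qed

lemma cls_eq: "cls R u = cls R v \<longleftrightarrow> grp_eq R u v"
proof
  assume "cls R u = cls R v" then have "v \<in> cls R u" by (simp add: cls_def)
  then show "grp_eq R u v" by (simp add: cls_def)
next
  assume h: "grp_eq R u v"
  show "cls R u = cls R v" unfolding cls_def using h ge_sym ge_trans by blast
qed

lemma mult_cls: "cls R (pos u) \<otimes>\<^bsub>pos_monoid R\<^esub> cls R (pos v) = cls R (pos (u@v))"
proof -
  have eq: "cls R (u'@v') = cls R (pos (u@v))" if "u' \<in> cls R (pos u)" "v' \<in> cls R (pos v)" for u' v'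
  proof -
    have "grp_eq R (pos u) u'" "grp_eq R (pos v) v'" using that by (simp_all add: cls_def)
    then have "grp_eq R (pos u @ pos v) (u'@v')" by (rule ge_app)
    from ge_sym[OF this] show ?thesis unfolding cls_eq by simp
  qed
  have m: "pos u \<in> cls R (pos u)" "pos v \<in> cls R (pos v)" by (simp_all add: cls_def)
  have "cls R (pos u) \<otimes>\<^bsub>pos_monoid R\<^esub> cls R (pos v) = (\<Union>u'\<in>cls R (pos u). \<Union>v'\<in>cls R (pos v). cls R (u'@v'))"
    by (simp add: pos_monoid_def)
  also have "\<dots> = (\<Union>u'\<in>cls R (pos u). \<Union>v'\<in>cls R (pos v). cls R (pos (u@v)))"
    apply (rule SUP_cong[OF refl])
    apply (rule SUP_cong[OF refl])
    by (rule eq)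
  also have "\<dots> = cls R (pos (u@v))" using m by auto
  finally show ?thesis .
qed

lemma carrier_pm: "z \<in> carrier (pos_monoid R) \<longleftrightarrow> (\<exists>q. z = cls R (pos q))"
  by (auto simp: pos_monoid_def)

lemma ldvd_pm: "left_dvd (pos_monoid R) (cls R (pos x)) (cls R (pos q)) \<longleftrightarrow> (\<exists>w. grp_eq R (pos q) (pos (x@w)))"
proof
  assume "left_dvd (pos_monoid R) (cls R (pos x)) (cls R (pos q))"
  then obtain w where w: "w \<in> carrier (pos_monoid R)" "cls R (pos q) = cls R (pos x) \<otimes>\<^bsub>pos_monoid R\<^esub> w"
    unfolding left_dvd_def by blast
  from w(1) obtain u where "w = cls R (pos u)" unfolding carrier_pm by blast
  with w(2) have "cls R (pos q) = cls R (pos (x@u))" by (simp only: mult_cls)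
  then show "\<exists>w. grp_eq R (pos q) (pos (x@w))" using cls_eq by blast
next
  assume "\<exists>w. grp_eq R (pos q) (pos (x@w))"
  then obtain w where "grp_eq R (pos q) (pos (x@w))" by blast
  then have e: "cls R (pos q) = cls R (pos x) \<otimes>\<^bsub>pos_monoid R\<^esub> cls R (pos w)"
    unfolding mult_cls cls_eq .
  have "cls R (pos w) \<in> carrier (pos_monoid R)" unfolding carrier_pm by blast
  with e show "left_dvd (pos_monoid R) (cls R (pos x)) (cls R (pos q))"
    unfolding left_dvd_def by blast
qed

lemma rdvd_pm: "right_dvd (pos_monoid R) (cls R (pos x)) (cls R (pos q)) \<longleftrightarrow> (\<exists>w. grp_eq R (pos q) (pos (w@x)))"
proof
  assume "right_dvd (pos_monoid R) (cls R (pos x)) (cls R (pos q))"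
  then obtain w where w: "w \<in> carrier (pos_monoid R)" "cls R (pos q) = w \<otimes>\<^bsub>pos_monoid R\<^esub> cls R (pos x)"
    unfolding right_dvd_def by blast
  from w(1) obtain u where "w = cls R (pos u)" unfolding carrier_pm by blast
  with w(2) have "cls R (pos q) = cls R (pos (u@x))" by (simp only: mult_cls)
  then show "\<exists>w. grp_eq R (pos q) (pos (w@x))" using cls_eq by blast
next
  assume "\<exists>w. grp_eq R (pos q) (pos (w@x))"
  then obtain w where "grp_eq R (pos q) (pos (w@x))" by blast
  then have e: "cls R (pos q) = cls R (pos w) \<otimes>\<^bsub>pos_monoid R\<^esub> cls R (pos x)"
    unfolding mult_cls cls_eq .
  have "cls R (pos w) \<in> carrier (pos_monoid R)" unfolding carrier_pm by blast
  with e show "right_dvd (pos_monoid R) (cls R (pos x)) (cls R (pos q))"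
    unfolding right_dvd_def by blast
qed


lemma no_llcm:
  assumes LP: "\<forall>(l,r)\<in>R. length l = length r"
  and c1: "grp_eq R (pos p1) (pos (x#u1))" "grp_eq R (pos p1) (pos (y#v1))"
  and c2: "grp_eq R (pos p2) (pos (x#u2))" "grp_eq R (pos p2) (pos (y#v2))"
  and H3: "\<forall>u v. length u = length v \<longrightarrow> Suc (length u) < length p1 \<longrightarrow> \<not> grp_eq R (pos (x#u)) (pos (y#v))"
  and H4: "\<forall>w. length p1 + length w = length p2 \<longrightarrow> \<not> grp_eq R (pos (p1@w)) (pos p2)"
  shows "\<not> (\<exists>z. is_lcm (pos_monoid R) (left_dvd (pos_monoid R)) (cls R (pos [x])) (cls R (pos [y])) z)"
proof
  let ?M = "pos_monoid R"
  assume "\<exists>z. is_lcm ?M (left_dvd ?M) (cls R (pos [x])) (cls R (pos [y])) z"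
  then obtain z where L: "is_lcm ?M (left_dvd ?M) (cls R (pos [x])) (cls R (pos [y])) z" by blast
  from L have "z \<in> carrier ?M" unfolding is_lcm_def by blast
  then obtain q where zq: "z = cls R (pos q)" unfolding carrier_pm by blast
  from L have "left_dvd ?M (cls R (pos [x])) z" "left_dvd ?M (cls R (pos [y])) z" unfolding is_lcm_def by blast+
  then obtain u v where qu: "grp_eq R (pos q) (pos ([x]@u))" and qv: "grp_eq R (pos q) (pos ([y]@v))"
    unfolding zq ldvd_pm by blast
  have lu: "length q = Suc (length u)" using len_eq[OF LP qu] by simp
  have lv: "length q = Suc (length v)" using len_eq[OF LP qv] by simp
  have "grp_eq R (pos ([x]@u)) (pos ([y]@v))" using ge_trans[OF ge_sym[OF qu] qv] .
  then have ne: "grp_eq R (pos (x#u)) (pos (y#v))" by simp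
  have "length u = length v" using lu lv by simp
  then have "\<not> Suc (length u) < length p1" using H3 ne by blast
  then have lq: "length p1 \<le> length q" using lu by simp
  have all: "\<exists>w. grp_eq R (pos p) (pos (q@w))"
    if h: "grp_eq R (pos p) (pos (x#w1))" "grp_eq R (pos p) (pos (y#w2))" for p w1 w2
  proof -
    have "grp_eq R (pos p) (pos ([x]@w1))" "grp_eq R (pos p) (pos ([y]@w2))" using h by simp_all
    then have "left_dvd ?M (cls R (pos [x])) (cls R (pos p))" "left_dvd ?M (cls R (pos [y])) (cls R (pos p))"
      unfolding ldvd_pm by blast+
    moreover have "cls R (pos p) \<in> carrier ?M" unfolding carrier_pm by blast
    ultimately have "left_dvd ?M z (cls R (pos p))" using L unfolding is_lcm_def by blast
    then show "\<exists>w. grp_eq R (pos p) (pos (q@w))" unfolding zq ldvd_pm .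
  qed
  obtain w1 where w1: "grp_eq R (pos p1) (pos (q@w1))" using all[OF c1] by blast
  have "length p1 = length q + length w1" using len_eq[OF LP w1] by simp
  with lq have "w1 = []" by simp
  with w1 have pq: "grp_eq R (pos p1) (pos q)" by simp
  obtain w2 where w2: "grp_eq R (pos p2) (pos (q@w2))" using all[OF c2] by blast
  have "length p2 = length q + length w2" using len_eq[OF LP w2] by simp
  moreover have "length p1 = length q" using len_eq[OF LP pq] .
  ultimately have l2: "length p1 + length w2 = length p2" by simp
  have "grp_eq R (pos q @ pos w2) (pos p1 @ pos w2)" using ge_app[OF ge_sym[OF pq] ge_refl] .
  then have "grp_eq R (pos p2) (pos (p1@w2))" using ge_trans[OF w2] by simp
  then show False using H4 l2 ge_sym by blast
qed

lemma no_rlcm: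
  assumes LP: "\<forall>(l,r)\<in>R. length l = length r"
  and c1: "grp_eq R (pos p1) (pos (u1@[x]))" "grp_eq R (pos p1) (pos (v1@[y]))"
  and c2: "grp_eq R (pos p2) (pos (u2@[x]))" "grp_eq R (pos p2) (pos (v2@[y]))"
  and H3: "\<forall>u v. length u = length v \<longrightarrow> Suc (length u) < length p1 \<longrightarrow> \<not> grp_eq R (pos (u@[x])) (pos (v@[y]))"
  and H4: "\<forall>w. length p1 + length w = length p2 \<longrightarrow> \<not> grp_eq R (pos (w@p1)) (pos p2)"
  shows "\<not> (\<exists>z. is_lcm (pos_monoid R) (right_dvd (pos_monoid R)) (cls R (pos [x])) (cls R (pos [y])) z)"
proof
  let ?M = "pos_monoid R"
  assume "\<exists>z. is_lcm ?M (right_dvd ?M) (cls R (pos [x])) (cls R (pos [y])) z"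
  then obtain z where L: "is_lcm ?M (right_dvd ?M) (cls R (pos [x])) (cls R (pos [y])) z" by blast
  from L have "z \<in> carrier ?M" unfolding is_lcm_def by blast
  then obtain q where zq: "z = cls R (pos q)" unfolding carrier_pm by blast
  from L have "right_dvd ?M (cls R (pos [x])) z" "right_dvd ?M (cls R (pos [y])) z" unfolding is_lcm_def by blast+
  then obtain u v where qu: "grp_eq R (pos q) (pos (u@[x]))" and qv: "grp_eq R (pos q) (pos (v@[y]))"
    unfolding zq rdvd_pm by blast
  have lu: "length q = Suc (length u)" using len_eq[OF LP qu] by simp
  have lv: "length q = Suc (length v)" using len_eq[OF LP qv] by simp
  have ne: "grp_eq R (pos (u@[x])) (pos (v@[y]))" using ge_trans[OF ge_sym[OF qu] qv] .
  have "length u = length v" using lu lv by simp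
  then have "\<not> Suc (length u) < length p1" using H3 ne by blast
  then have lq: "length p1 \<le> length q" using lu by simp
  have all: "\<exists>w. grp_eq R (pos p) (pos (w@q))"
    if h: "grp_eq R (pos p) (pos (w1@[x]))" "grp_eq R (pos p) (pos (w2@[y]))" for p w1 w2
  proof -
    have "right_dvd ?M (cls R (pos [x])) (cls R (pos p))" "right_dvd ?M (cls R (pos [y])) (cls R (pos p))"
      unfolding rdvd_pm using h by blast+
    moreover have "cls R (pos p) \<in> carrier ?M" unfolding carrier_pm by blast
    ultimately have "right_dvd ?M z (cls R (pos p))" using L unfolding is_lcm_def by blast
    then show "\<exists>w. grp_eq R (pos p) (pos (w@q))" unfolding zq rdvd_pm .
  qed
  obtain w1 where w1: "grp_eq R (pos p1) (pos (w1@q))" using all[OF c1] by blast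
  have "length p1 = length w1 + length q" using len_eq[OF LP w1] by simp
  with lq have "w1 = []" by simp
  with w1 have pq: "grp_eq R (pos p1) (pos q)" by simp
  obtain w2 where w2: "grp_eq R (pos p2) (pos (w2@q))" using all[OF c2] by blast
  have "length p2 = length w2 + length q" using len_eq[OF LP w2] by simp
  moreover have "length p1 = length q" using len_eq[OF LP pq] .
  ultimately have l2: "length p1 + length w2 = length p2" by simp
  have "grp_eq R (pos w2 @ pos q) (pos w2 @ pos p1)" using ge_app[OF ge_refl ge_sym[OF pq]] .
  then have "grp_eq R (pos p2) (pos (w2@p1))" using ge_trans[OF w2] by simp
  then show False using H4 l2 ge_sym by blast
qed

lemma gauss_lcms:
  assumes "gaussian (pos_monoid R)"
  shows "\<exists>z. is_lcm (pos_monoid R) (left_dvd (pos_monoid R)) (cls R (pos [x])) (cls R (pos [y])) z"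
    and "\<exists>z. is_lcm (pos_monoid R) (right_dvd (pos_monoid R)) (cls R (pos [x])) (cls R (pos [y])) z"
proof -
  have "cls R (pos [x]) \<in> carrier (pos_monoid R)" "cls R (pos [y]) \<in> carrier (pos_monoid R)"
    unfolding carrier_pm by blast+
  then show "\<exists>z. is_lcm (pos_monoid R) (left_dvd (pos_monoid R)) (cls R (pos [x])) (cls R (pos [y])) z"
    and "\<exists>z. is_lcm (pos_monoid R) (right_dvd (pos_monoid R)) (cls R (pos [x])) (cls R (pos [y])) z"
    using assms unfolding gaussian_def by blast+
qed

definition ap :: "nat list \<Rightarrow> nat \<Rightarrow> nat" where "ap Ls i = (if i < length Ls then Ls!i else i)"
definition pa :: "(gen \<Rightarrow> nat list) \<Rightarrow> (gen \<Rightarrow> nat list) \<Rightarrow> gen \<Rightarrow> bool \<Rightarrow> nat \<Rightarrow> nat" where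
  "pa T U g s = ap (if s then T g else U g)"

lemma all_gen: "(\<forall>g. P g) \<longleftrightarrow> P a \<and> P b \<and> P c" by (metis gen.exhaust)

lemma pa_inv:
  assumes "\<forall>g. length (T g) = n \<and> length (U g) = n \<and> list_all (\<lambda>i. T g ! i < n \<and> U g ! i < n \<and> U g ! (T g ! i) = i \<and> T g ! (U g ! i) = i) [0..<n]"
  shows "\<forall>g s x. pa T U g (\<not>s) (pa T U g s x) = x"
  using assms by (auto simp: pa_def ap_def list_all_iff)

lemma evw_big:
  assumes "\<forall>g. length (T g) = n \<and> length (U g) = n" "n \<le> x"
  shows "evw (pa T U) w x = x"
  using assms(2)
proof (induction w arbitrary: x)
  case Nil then show ?case by simp
next
  case (Cons y w)
  have "pa T U (fst y) (snd y) x = x" using assms(1) Cons.prems by (simp add: pa_def ap_def)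
  then show ?case using Cons by simp
qed

lemma pa_rel:
  assumes "\<forall>g. length (T g) = n \<and> length (U g) = n"
  and "list_all (\<lambda>i. evw (pa T U) (pos l) i = evw (pa T U) (pos r) i) [0..<n]"
  shows "\<forall>x. evw (pa T U) (pos l) x = evw (pa T U) (pos r) x"
proof
  fix x show "evw (pa T U) (pos l) x = evw (pa T U) (pos r) x"
    using assms evw_big[OF assms(1)] by (cases "x < n") (auto simp: list_all_iff)
qed

lemma pa_rel_all:
  assumes "\<forall>g. length (T g) = n \<and> length (U g) = n"
  and "\<forall>(l,r)\<in>R. list_all (\<lambda>i. evw (pa T U) (pos l) i = evw (pa T U) (pos r) i) [0..<n]"
  shows "\<forall>(l,r)\<in>R. \<forall>x. evw (pa T U) (pos l) x = evw (pa T U) (pos r) x"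
  using pa_rel[OF assms(1)] assms(2) by fast

lemma neq_by:
  assumes i: "\<forall>g s x. f g (\<not>s) (f g s x) = x" and r: "\<forall>(l,r)\<in>R. \<forall>x. evw f (pos l) x = evw f (pos r) x"
  and "map (evw f u) ks \<noteq> map (evw f v) ks"
  shows "\<not> grp_eq R u v"
  using evw_eq[OF i r] assms(3) by metis

lemma len01: "length u < 2 \<Longrightarrow> u = [] \<or> u = [a] \<or> u = [b] \<or> u = [c]"
proof (cases u)
  case (Cons g w)
  assume "length u < 2"
  with Cons have "w = []" by simp
  with Cons show ?thesis by (cases g) simp_all
qed simp

lemma len1: "length u = 1 \<Longrightarrow> u = [a] \<or> u = [b] \<or> u = [c]"
  using len01[of u] by auto

definition PL :: "(gen list \<times> gen list) list" where
  "PL = ([],[]) # [([g],[h]). g \<leftarrow> [a,b,c], h \<leftarrow> [a,b,c]]"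

lemma PL_cover: "length u = length v \<Longrightarrow> length u < 2 \<Longrightarrow> (u,v) \<in> set PL"
  using len01[of u] len01[of v] by (auto simp: PL_def)

lemma W1_cover: "length w = 1 \<Longrightarrow> w \<in> set [[a],[b],[c]]"
  using len1[of w] by auto


definition TBvi :: "gen \<Rightarrow> nat list" where
  "TBvi g = (case g of a \<Rightarrow> [1, 2, 3, 4, 0] | b \<Rightarrow> [2, 0, 4, 1, 3] | c \<Rightarrow> [1, 4, 3, 0, 2])"
definition UBvi :: "gen \<Rightarrow> nat list" where
  "UBvi g = (case g of a \<Rightarrow> [4, 0, 1, 2, 3] | b \<Rightarrow> [1, 3, 0, 4, 2] | c \<Rightarrow> [3, 0, 4, 2, 1])"


lemma len_Bvi: "\<forall>g. length (TBvi g) = 5 \<and> length (UBvi g) = 5"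
  unfolding all_gen by (simp add: TBvi_def UBvi_def)

lemma inv_Bvi: "\<forall>g s x. (pa TBvi UBvi) g (\<not>s) ((pa TBvi UBvi) g s x) = x"
  apply (rule pa_inv[where n=5])
  unfolding all_gen by code_simp

lemma rel_Bvi: "\<forall>(l,r)\<in>(rels B_vi). \<forall>x. evw (pa TBvi UBvi) (pos l) x = evw (pa TBvi UBvi) (pos r) x"
  by (rule pa_rel_all[OF len_Bvi]) code_simp

lemma neq_Bvi: "map (evw (pa TBvi UBvi) (pos u)) [0..<5] \<noteq> map (evw (pa TBvi UBvi) (pos v)) [0..<5] \<Longrightarrow> \<not> grp_eq (rels B_vi) (pos u) (pos v)"
  by (rule neq_by[OF inv_Bvi rel_Bvi])

lemma lp_Bvi: "\<forall>(l,r)\<in>(rels B_vi). length l = length r" by simp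

definition THii :: "gen \<Rightarrow> nat list" where
  "THii g = (case g of a \<Rightarrow> [0, 1, 3, 4, 2] | b \<Rightarrow> [0, 2, 3, 1, 4] | c \<Rightarrow> [1, 2, 0, 3, 4])"
definition UHii :: "gen \<Rightarrow> nat list" where
  "UHii g = (case g of a \<Rightarrow> [0, 1, 4, 2, 3] | b \<Rightarrow> [0, 3, 1, 2, 4] | c \<Rightarrow> [2, 0, 1, 3, 4])"


lemma len_Hii: "\<forall>g. length (THii g) = 5 \<and> length (UHii g) = 5"
  unfolding all_gen by (simp add: THii_def UHii_def)

lemma inv_Hii: "\<forall>g s x. (pa THii UHii) g (\<not>s) ((pa THii UHii) g s x) = x"
  apply (rule pa_inv[where n=5])
  unfolding all_gen by code_simp

lemma rel_Hii: "\<forall>(l,r)\<in>(rels H_ii). \<forall>x. evw (pa THii UHii) (pos l) x = evw (pa THii UHii) (pos r) x"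
  by (rule pa_rel_all[OF len_Hii]) code_simp

lemma neq_Hii: "map (evw (pa THii UHii) (pos u)) [0..<5] \<noteq> map (evw (pa THii UHii) (pos v)) [0..<5] \<Longrightarrow> \<not> grp_eq (rels H_ii) (pos u) (pos v)"
  by (rule neq_by[OF inv_Hii rel_Hii])

lemma lp_Hii: "\<forall>(l,r)\<in>(rels H_ii). length l = length r" by simp

definition THiii :: "gen \<Rightarrow> nat list" where
  "THiii g = (case g of a \<Rightarrow> [1, 2, 3, 4, 0] | b \<Rightarrow> [2, 0, 4, 1, 3] | c \<Rightarrow> [3, 0, 4, 2, 1])"
definition UHiii :: "gen \<Rightarrow> nat list" where
  "UHiii g = (case g of a \<Rightarrow> [4, 0, 1, 2, 3] | b \<Rightarrow> [1, 3, 0, 4, 2] | c \<Rightarrow> [1, 4, 3, 0, 2])"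


lemma len_Hiii: "\<forall>g. length (THiii g) = 5 \<and> length (UHiii g) = 5"
  unfolding all_gen by (simp add: THiii_def UHiii_def)

lemma inv_Hiii: "\<forall>g s x. (pa THiii UHiii) g (\<not>s) ((pa THiii UHiii) g s x) = x"
  apply (rule pa_inv[where n=5])
  unfolding all_gen by code_simp

lemma rel_Hiii: "\<forall>(l,r)\<in>(rels H_iii). \<forall>x. evw (pa THiii UHiii) (pos l) x = evw (pa THiii UHiii) (pos r) x"
  by (rule pa_rel_all[OF len_Hiii]) code_simp

lemma neq_Hiii: "map (evw (pa THiii UHiii) (pos u)) [0..<5] \<noteq> map (evw (pa THiii UHiii) (pos v)) [0..<5] \<Longrightarrow> \<not> grp_eq (rels H_iii) (pos u) (pos v)"
  by (rule neq_by[OF inv_Hiii rel_Hiii])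

lemma lp_Hiii: "\<forall>(l,r)\<in>(rels H_iii). length l = length r" by simp

definition TBii :: "gen \<Rightarrow> nat list" where
  "TBii g = (case g of a \<Rightarrow> [12, 7, 5, 15, 10, 2, 18, 1, 11, 21, 4, 8, 0, 19, 17, 3, 22, 14, 6, 13, 23, 9, 16, 20] | b \<Rightarrow> [13, 8, 3, 16, 11, 0, 19, 2, 9, 22, 5, 6, 1, 20, 15, 4, 23, 12, 7, 14, 21, 10, 17, 18] | c \<Rightarrow> [3, 13, 8, 0, 16, 11, 9, 19, 2, 6, 22, 5, 15, 1, 20, 12, 4, 23, 21, 7, 14, 18, 10, 17])"
definition UBii :: "gen \<Rightarrow> nat list" where
  "UBii g = (case g of a \<Rightarrow> [12, 7, 5, 15, 10, 2, 18, 1, 11, 21, 4, 8, 0, 19, 17, 3, 22, 14, 6, 13, 23, 9, 16, 20] | b \<Rightarrow> [5, 12, 7, 2, 15, 10, 11, 18, 1, 8, 21, 4, 17, 0, 19, 14, 3, 22, 23, 6, 13, 20, 9, 16] | c \<Rightarrow> [3, 13, 8, 0, 16, 11, 9, 19, 2, 6, 22, 5, 15, 1, 20, 12, 4, 23, 21, 7, 14, 18, 10, 17])"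


lemma len_Bii: "\<forall>g. length (TBii g) = 24 \<and> length (UBii g) = 24"
  unfolding all_gen by (simp add: TBii_def UBii_def)

lemma inv_Bii: "\<forall>g s x. (pa TBii UBii) g (\<not>s) ((pa TBii UBii) g s x) = x"
  apply (rule pa_inv[where n=24])
  unfolding all_gen by code_simp

lemma rel_Bii: "\<forall>(l,r)\<in>(rels B_ii). \<forall>x. evw (pa TBii UBii) (pos l) x = evw (pa TBii UBii) (pos r) x"
  by (rule pa_rel_all[OF len_Bii]) code_simp

lemma neq_Bii: "map (evw (pa TBii UBii) (pos u)) [0..<24] \<noteq> map (evw (pa TBii UBii) (pos v)) [0..<24] \<Longrightarrow> \<not> grp_eq (rels B_ii) (pos u) (pos v)"
  by (rule neq_by[OF inv_Bii rel_Bii])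

lemma lp_Bii: "\<forall>(l,r)\<in>(rels B_ii). length l = length r" by simp


lemma Bii_E0: "grp_eq (rels B_ii) (pos ([b]@[b,b,a]@[a,c,b,a])) (pos ([b]@[c,b,b]@[a,c,b,a]))"
proof -
  have "grp_eq (rels B_ii) (pos ([b]@[b,b,a]@[a,c,b,a])) (pos [b,b,b,a,c,a,b,a])"
    by (rule ge_relF[where l="[a,c]" and r="[c,a]" and u="[b,b,b,a]" and v="[b,a]"]) simp_all
  also have "grp_eq (rels B_ii) \<dots> (pos [b,b,b,a,c,b,c,a])"
    by (rule ge_relB[where l="[b,c]" and r="[a,b]" and u="[b,b,b,a,c]" and v="[a]"]) simp_all
  also have "grp_eq (rels B_ii) \<dots> (pos [b,b,b,c,a,b,c,a])"
    by (rule ge_relF[where l="[a,c]" and r="[c,a]" and u="[b,b,b]" and v="[b,c,a]"]) simp_all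
  also have "grp_eq (rels B_ii) \<dots> (pos [b,b,a,b,a,b,c,a])"
    by (rule ge_relF[where l="[b,c]" and r="[a,b]" and u="[b,b]" and v="[a,b,c,a]"]) simp_all
  also have "grp_eq (rels B_ii) \<dots> (pos [b,b,a,b,a,b,a,c])"
    by (rule ge_relB[where l="[a,c]" and r="[c,a]" and u="[b,b,a,b,a,b]" and v="[]"]) simp_all
  also have "grp_eq (rels B_ii) \<dots> (pos [b,a,b,a,b,a,b,c])"
    by (rule ge_relB[where l="[a,b,a,b,a,b]" and r="[b,a,b,a,b,a]" and u="[b]" and v="[c]"]) simp_all
  also have "grp_eq (rels B_ii) \<dots> (pos [a,b,a,b,a,b,b,c])"
    by (rule ge_relB[where l="[a,b,a,b,a,b]" and r="[b,a,b,a,b,a]" and u="[]" and v="[b,c]"]) simp_all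
  also have "grp_eq (rels B_ii) \<dots> (pos [a,b,a,b,a,b,a,b])"
    by (rule ge_relF[where l="[b,c]" and r="[a,b]" and u="[a,b,a,b,a,b]" and v="[]"]) simp_all
  also have "grp_eq (rels B_ii) \<dots> (pos [a,b,b,a,b,a,b,a])"
    by (rule ge_relF[where l="[a,b,a,b,a,b]" and r="[b,a,b,a,b,a]" and u="[a,b]" and v="[]"]) simp_all
  also have "grp_eq (rels B_ii) \<dots> (pos [b,c,b,a,b,a,b,a])"
    by (rule ge_relB[where l="[b,c]" and r="[a,b]" and u="[]" and v="[b,a,b,a,b,a]"]) simp_all
  also have "grp_eq (rels B_ii) \<dots> (pos [b,c,b,b,c,a,b,a])"
    by (rule ge_relB[where l="[b,c]" and r="[a,b]" and u="[b,c,b]" and v="[a,b,a]"]) simp_all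
  also have "grp_eq (rels B_ii) \<dots> (pos [b,c,b,b,a,c,b,a])"
    by (rule ge_relB[where l="[a,c]" and r="[c,a]" and u="[b,c,b,b]" and v="[b,a]"]) simp_all
  finally show ?thesis by simp
qed

lemma Bii_E: "grp_eq (rels B_ii) (pos [b,b,a]) (pos [c,b,b])"
proof -
  have "grp_eq (rels B_ii) (pos [b] @ (pos [b,b,a] @ pos [a,c,b,a])) (pos [b] @ (pos [c,b,b] @ pos [a,c,b,a]))"
    using Bii_E0 unfolding pos_app .
  then have "grp_eq (rels B_ii) (pos [b,b,a] @ pos [a,c,b,a]) (pos [c,b,b] @ pos [a,c,b,a])" by (rule ge_lcancel)
  then show ?thesis by (rule ge_rcancel)
qed

lemma Bii_F: "grp_eq (rels B_ii) (pos [b,c,b,a]) (pos [c,a,b,b])"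
proof -
  have "grp_eq (rels B_ii) (pos [b,c,b,a]) (pos [a,b,b,a])"
    by (rule ge_relF[where l="[b,c]" and r="[a,b]" and u="[]" and v="[b,a]"]) simp_all
  also have "grp_eq (rels B_ii) \<dots> (pos ([a]@[c,b,b]))"
    using ge_app[OF ge_refl[of _ "pos [a]"] Bii_E] by simp
  also have "grp_eq (rels B_ii) \<dots> (pos [c,a,b,b])"
    by (rule ge_relF[where l="[a,c]" and r="[c,a]" and u="[]" and v="[b,b]"]) simp_all
  finally show ?thesis .
qed


lemma nonG_Bvi: "\<not> gaussian (pos_monoid (rels B_vi))"
proof
  assume G: "gaussian (pos_monoid (rels B_vi))"
  have c0: "grp_eq (rels B_vi) (pos [a,b,a]) (pos (a#[b,a]))"
    by simp
  have c1: "grp_eq (rels B_vi) (pos [a,b,a]) (pos (b#[a,b]))"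
    by (rule ge_relF[where l="[a,b,a]" and r="[b,a,b]" and u="[]" and v="[]"]) simp_all
  have c2: "grp_eq (rels B_vi) (pos [a,c,a]) (pos (a#[c,a]))"
    by simp
  have c3: "grp_eq (rels B_vi) (pos [a,c,a]) (pos (b#[a,c]))"
    by (rule ge_relF[where l="[a,c,a]" and r="[b,a,c]" and u="[]" and v="[]"]) simp_all
  have H3: "\<forall>u v. length u = length v \<longrightarrow> Suc (length u) < 3 \<longrightarrow> \<not> grp_eq (rels B_vi) (pos (a#u)) (pos (b#v))"
  proof -
    have "\<forall>(u,v)\<in>set PL. map (evw (pa TBvi UBvi) (pos (a#u))) [0..<5] \<noteq> map (evw (pa TBvi UBvi) (pos (b#v))) [0..<5]"
      by code_simp
    then have *: "\<forall>(u,v)\<in>set PL. \<not> grp_eq (rels B_vi) (pos (a#u)) (pos (b#v))" using neq_Bvi by fast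
    show ?thesis
    proof (intro allI impI)
      fix u v :: "gen list" assume "length u = length v" "Suc (length u) < 3"
      then have "(u,v) \<in> set PL" by (intro PL_cover) simp_all
      with * show "\<not> grp_eq (rels B_vi) (pos (a#u)) (pos (b#v))" by blast
    qed
  qed
  have H4: "\<forall>w. length [a,b,a] + length w = length [a,c,a] \<longrightarrow> \<not> grp_eq (rels B_vi) (pos ([a,b,a]@w)) (pos [a,c,a])"
  proof (intro allI impI)
    fix w :: "gen list" assume "length [a,b,a] + length w = length [a,c,a]"
    then have "w = []" by simp
    moreover have "\<not> grp_eq (rels B_vi) (pos [a,b,a]) (pos [a,c,a])" by (rule neq_Bvi) code_simp
    ultimately show "\<not> grp_eq (rels B_vi) (pos ([a,b,a]@w)) (pos [a,c,a])" by simp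
  qed
  show False using no_llcm[OF lp_Bvi c0 c1 c2 c3] H3 H4 gauss_lcms(1)[OF G, of a b] by simp
qed


lemma nonG_Hii: "\<not> gaussian (pos_monoid (rels H_ii))"
proof
  assume G: "gaussian (pos_monoid (rels H_ii))"
  have c0: "grp_eq (rels H_ii) (pos [a,c,a]) (pos (a#[c,a]))"
    by simp
  have c1: "grp_eq (rels H_ii) (pos [a,c,a]) (pos (b#[a,c]))"
    by (rule ge_relF[where l="[a,c,a]" and r="[b,a,c]" and u="[]" and v="[]"]) simp_all
  have c2: "grp_eq (rels H_ii) (pos [a,b,a,b]) (pos (a#[b,a,b]))"
    by simp
  have c3: "grp_eq (rels H_ii) (pos [a,b,a,b]) (pos (b#[a,b,a]))"
    by (rule ge_relF[where l="[a,b,a,b]" and r="[b,a,b,a]" and u="[]" and v="[]"]) simp_all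
  have H3: "\<forall>u v. length u = length v \<longrightarrow> Suc (length u) < 3 \<longrightarrow> \<not> grp_eq (rels H_ii) (pos (a#u)) (pos (b#v))"
  proof -
    have "\<forall>(u,v)\<in>set PL. map (evw (pa THii UHii) (pos (a#u))) [0..<5] \<noteq> map (evw (pa THii UHii) (pos (b#v))) [0..<5]"
      by code_simp
    then have *: "\<forall>(u,v)\<in>set PL. \<not> grp_eq (rels H_ii) (pos (a#u)) (pos (b#v))" using neq_Hii by fast
    show ?thesis
    proof (intro allI impI)
      fix u v :: "gen list" assume "length u = length v" "Suc (length u) < 3"
      then have "(u,v) \<in> set PL" by (intro PL_cover) simp_all
      with * show "\<not> grp_eq (rels H_ii) (pos (a#u)) (pos (b#v))" by blast
    qed
  qed
  have H4: "\<forall>w. length [a,c,a] + length w = length [a,b,a,b] \<longrightarrow> \<not> grp_eq (rels H_ii) (pos ([a,c,a]@w)) (pos [a,b,a,b])"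
  proof -
    have "\<forall>w\<in>set [[a],[b],[c]]. map (evw (pa THii UHii) (pos ([a,c,a]@w))) [0..<5] \<noteq> map (evw (pa THii UHii) (pos [a,b,a,b])) [0..<5]"
      by code_simp
    then have *: "\<forall>w\<in>set [[a],[b],[c]]. \<not> grp_eq (rels H_ii) (pos ([a,c,a]@w)) (pos [a,b,a,b])" using neq_Hii by fast
    show ?thesis
    proof (intro allI impI)
      fix w :: "gen list" assume "length [a,c,a] + length w = length [a,b,a,b]"
      then have "w \<in> set [[a],[b],[c]]" by (intro W1_cover) simp
      with * show "\<not> grp_eq (rels H_ii) (pos ([a,c,a]@w)) (pos [a,b,a,b])" by blast
    qed
  qed
  show False using no_llcm[OF lp_Hii c0 c1 c2 c3] H3 H4 gauss_lcms(1)[OF G, of a b] by simp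
qed


lemma nonG_Hiii: "\<not> gaussian (pos_monoid (rels H_iii))"
proof
  assume G: "gaussian (pos_monoid (rels H_iii))"
  have c0: "grp_eq (rels H_iii) (pos [a,b,a]) (pos ([a,b]@[a]))"
    by simp
  have c1: "grp_eq (rels H_iii) (pos [a,b,a]) (pos ([b,a]@[b]))"
    by (rule ge_relF[where l="[a,b,a]" and r="[b,a,b]" and u="[]" and v="[]"]) simp_all
  have c2: "grp_eq (rels H_iii) (pos [c,b,a]) (pos ([c,b]@[a]))"
    by simp
  have c3: "grp_eq (rels H_iii) (pos [c,b,a]) (pos ([a,c]@[b]))"
    by (rule ge_relF[where l="[c,b,a]" and r="[a,c,b]" and u="[]" and v="[]"]) simp_all
  have H3: "\<forall>u v. length u = length v \<longrightarrow> Suc (length u) < 3 \<longrightarrow> \<not> grp_eq (rels H_iii) (pos (u@[a])) (pos (v@[b]))"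
  proof -
    have "\<forall>(u,v)\<in>set PL. map (evw (pa THiii UHiii) (pos (u@[a]))) [0..<5] \<noteq> map (evw (pa THiii UHiii) (pos (v@[b]))) [0..<5]"
      by code_simp
    then have *: "\<forall>(u,v)\<in>set PL. \<not> grp_eq (rels H_iii) (pos (u@[a])) (pos (v@[b]))" using neq_Hiii by fast
    show ?thesis
    proof (intro allI impI)
      fix u v :: "gen list" assume "length u = length v" "Suc (length u) < 3"
      then have "(u,v) \<in> set PL" by (intro PL_cover) simp_all
      with * show "\<not> grp_eq (rels H_iii) (pos (u@[a])) (pos (v@[b]))" by blast
    qed
  qed
  have H4: "\<forall>w. length [a,b,a] + length w = length [c,b,a] \<longrightarrow> \<not> grp_eq (rels H_iii) (pos (w@[a,b,a])) (pos [c,b,a])"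
  proof (intro allI impI)
    fix w :: "gen list" assume "length [a,b,a] + length w = length [c,b,a]"
    then have "w = []" by simp
    moreover have "\<not> grp_eq (rels H_iii) (pos [a,b,a]) (pos [c,b,a])" by (rule neq_Hiii) code_simp
    ultimately show "\<not> grp_eq (rels H_iii) (pos (w@[a,b,a])) (pos [c,b,a])" by simp
  qed
  show False using no_rlcm[OF lp_Hiii c0 c1 c2 c3] H3 H4 gauss_lcms(2)[OF G, of a b] by simp
qed


lemma nonG_Bii: "\<not> gaussian (pos_monoid (rels B_ii))"
proof
  assume G: "gaussian (pos_monoid (rels B_ii))"
  have c0: "grp_eq (rels B_ii) (pos [c,b,b]) (pos (b#[b,a]))"
    using ge_sym[OF Bii_E] by simp
  have c1: "grp_eq (rels B_ii) (pos [c,b,b]) (pos (c#[b,b]))"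
    by simp
  have c2: "grp_eq (rels B_ii) (pos [b,c,b,a]) (pos (b#[c,b,a]))"
    by simp
  have c3: "grp_eq (rels B_ii) (pos [b,c,b,a]) (pos (c#[a,b,b]))"
    using Bii_F by simp
  have H3: "\<forall>u v. length u = length v \<longrightarrow> Suc (length u) < 3 \<longrightarrow> \<not> grp_eq (rels B_ii) (pos (b#u)) (pos (c#v))"
  proof -
    have "\<forall>(u,v)\<in>set PL. map (evw (pa TBii UBii) (pos (b#u))) [0..<24] \<noteq> map (evw (pa TBii UBii) (pos (c#v))) [0..<24]"
      by code_simp
    then have *: "\<forall>(u,v)\<in>set PL. \<not> grp_eq (rels B_ii) (pos (b#u)) (pos (c#v))" using neq_Bii by fast
    show ?thesis
    proof (intro allI impI)
      fix u v :: "gen list" assume "length u = length v" "Suc (length u) < 3"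
      then have "(u,v) \<in> set PL" by (intro PL_cover) simp_all
      with * show "\<not> grp_eq (rels B_ii) (pos (b#u)) (pos (c#v))" by blast
    qed
  qed
  have H4: "\<forall>w. length [c,b,b] + length w = length [b,c,b,a] \<longrightarrow> \<not> grp_eq (rels B_ii) (pos ([c,b,b]@w)) (pos [b,c,b,a])"
  proof -
    have "\<forall>w\<in>set [[a],[b],[c]]. map (evw (pa TBii UBii) (pos ([c,b,b]@w))) [0..<24] \<noteq> map (evw (pa TBii UBii) (pos [b,c,b,a])) [0..<24]"
      by code_simp
    then have *: "\<forall>w\<in>set [[a],[b],[c]]. \<not> grp_eq (rels B_ii) (pos ([c,b,b]@w)) (pos [b,c,b,a])" using neq_Bii by fast
    show ?thesis
    proof (intro allI impI)
      fix w :: "gen list" assume "length [c,b,b] + length w = length [b,c,b,a]"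
      then have "w \<in> set [[a],[b],[c]]" by (intro W1_cover) simp
      with * show "\<not> grp_eq (rels B_ii) (pos ([c,b,b]@w)) (pos [b,c,b,a])" by blast
    qed
  qed
  show False using no_llcm[OF lp_Bii c0 c1 c2 c3] H3 H4 gauss_lcms(1)[OF G, of b c] by simp
qed


theorem corollary5p1:
  shows "\<forall>X\<in>{B_ii, B_vi, H_ii, H_iii}. \<not> gaussian (pos_monoid (rels X))"
  using nonG_Bii nonG_Bvi nonG_Hii nonG_Hiii by blast

end
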